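(* Let $F$ be a face of the derived arrangement $\delta\mathcal{A}_{\bm o}$ and let $\bm a,\bm b\in\operatorname{relint}(F)$. Then for every partition $I,J,K$ of $[m]$, the polyhedra $P(\bm a,I,J,K)$ and $P(\bm b,I,J,K)$ are either both empty or both nonempty, and in the latter case they are normally equivalent and combinatorially equivalent.
   Context: Fix nonzero vectors $\bm u_1,\dots,\bm u_m\in\mathbb{R}^n$ (repetitions and parallel vectors allowed) and let $U$ be the $m\times n$ matrix with rows $\bm u_1,\dots,\bm u_m$. For $I\subseteq[m]=\{1,\dots,m\}$, $U_I$ is the submatrix of rows indexed by $I$, and for $\bm a\in\mathbb{R}^m$, $\bm a_I$ is the subvector with indices in $I$. For $\bm a\in\mathbb{R}^m$ and a partition $I,J,K$ of $[m]$ (parts may be empty), $P(\bm a,I,J,K)=\{\bm x\in\mathbb{R}^n: U_I\bm x=\bm a_I,\ U_J\bm x\le \bm a_J,\ U_K\bm x\ge\bm a_K\}$ (componentwise inequalities). Derived arrangement: a circuit is a subset $C\subseteq[m]$ such that the indexed family $\{\bm u_i: i\in C\}$ is a minimal linearly dependent family. For each circuit $C$ fix a circuit vector $\bm c^C=(c_1,\dots,c_m)\in\mathbb{R}^m$ with $\sum_i c_i\bm u_i=\bm 0$ and $c_i\ne0\iff i\in C$ (unique up to a nonzero scalar). The derived arrangement $\delta\mathcal{A}_{\bm o}$ is the arrangement in $\mathbb{R}^m$ of the linear hyperplanes $\{\bm y\in\mathbb{R}^m:\langle \bm c^C,\bm y\rangle=0\}$, $C$ ranging over all circuits. Its open faces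 are the nonempty sets of the form $\{\bm y: \operatorname{sign}\langle\bm c^C,\bm y\rangle=\epsilon_C\text{ for all circuits }C\}$ for fixed $\epsilon_C\in\{+,0,-\}$; its faces are the closures of the open faces, and $\operatorname{relint}(F)$ is the open face whose closure is $F$. For a nonempty convex polyhedron $P\subseteq\mathbb{R}^n$, its support function is $h_P(\bm u)=\sup\{\langle\bm u,\bm x\rangle:\bm x\in P\}$; for $\bm x\in P$ the normal cone is $N_P(\bm x)=\{\bm u\in\mathbb{R}^n:\langle\bm u,\bm x\rangle=h_P(\bm u)\}$; for a nonempty face $G$ of $P$, $N_P(G)=N_P(\bm x)$ for any $\bm x\in\operatorname{relint}(G)$; the normal fan is $\mathcal{N}(P)=\{N_P(G): G \text{ a nonempty face of }P\}$. Two convex polyhedra are normally equivalent if they have the same normal fan, and combinatorially equivalent if their face posets (all faces including $\emptyset$ and the polyhedron itself, ordered by inclusion) are isomorphic. *)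

theory Defs
  imports "HOL-Analysis.Analysis" "HOL-Library.Extended_Real"
begin

text \<open>Row vectors u i in R^n (index type 'n), indexed by the finite type 'm playing the role of [m].
  Vectors in R^m are elements of real^'m.\<close>

definition lin_dep_family :: "('m::finite \<Rightarrow> real^'n::finite) \<Rightarrow> 'm set \<Rightarrow> bool" where
  "lin_dep_family u C \<longleftrightarrow>
     (\<exists>c :: 'm \<Rightarrow> real. (\<forall>i. i \<notin> C \<longrightarrow> c i = 0) \<and> (\<exists>i\<in>C. c i \<noteq> 0)
        \<and> (\<Sum>i\<in>C. c i *\<^sub>R u i) = 0)"

definition is_circuit :: "('m::finite \<Rightarrow> real^'n::finite) \<Rightarrow> 'm set \<Rightarrow> bool" where
  "is_circuit u C \<longleftrightarrow> lin_dep_family u C \<and> (\<forall>D. D \<subset> C \<longrightarrow> \<not> lin_dep_family u D)"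

definition is_circuit_vector :: "('m::finite \<Rightarrow> real^'n::finite) \<Rightarrow> 'm set \<Rightarrow> real^'m \<Rightarrow> bool" where
  "is_circuit_vector u C c \<longleftrightarrow>
     (\<Sum>i\<in>UNIV. (c $ i) *\<^sub>R u i) = 0 \<and> (\<forall>i. c $ i \<noteq> 0 \<longleftrightarrow> i \<in> C)"

definition derived_open_faces ::
    "('m::finite \<Rightarrow> real^'n::finite) \<Rightarrow> ('m set \<Rightarrow> real^'m) \<Rightarrow> (real^'m) set set" where
  "derived_open_faces u cv =
     {G. G \<noteq> {} \<and> (\<exists>\<epsilon> :: 'm set \<Rightarrow> real. (\<forall>C. \<epsilon> C \<in> {-1, 0, 1}) \<and>
            G = {y. \<forall>C. is_circuit u C \<longrightarrow> sgn (cv C \<bullet> y) = \<epsilon> C})}"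

definition derived_faces ::
    "('m::finite \<Rightarrow> real^'n::finite) \<Rightarrow> ('m set \<Rightarrow> real^'m) \<Rightarrow> (real^'m) set set" where
  "derived_faces u cv = closure ` derived_open_faces u cv"

definition polyP ::
    "('m::finite \<Rightarrow> real^'n::finite) \<Rightarrow> real^'m \<Rightarrow> 'm set \<Rightarrow> 'm set \<Rightarrow> 'm set \<Rightarrow> (real^'n) set" where
  "polyP u a I J K = {x. (\<forall>i\<in>I. u i \<bullet> x = a $ i) \<and> (\<forall>i\<in>J. u i \<bullet> x \<le> a $ i)
                          \<and> (\<forall>i\<in>K. u i \<bullet> x \<ge> a $ i)}"

definition support_fun :: "'a::real_inner set \<Rightarrow> 'a \<Rightarrow> ereal" where
  "support_fun P v = (SUP x\<in>P. ereal (v \<bullet> x))"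

definition normal_cone :: "'a::real_inner set \<Rightarrow> 'a \<Rightarrow> 'a set" where
  "normal_cone P x = {v. ereal (v \<bullet> x) = support_fun P v}"

definition normal_fan :: "'a::euclidean_space set \<Rightarrow> 'a set set" where
  "normal_fan P = {normal_cone P x | x. \<exists>G. G face_of P \<and> G \<noteq> {} \<and> x \<in> rel_interior G}"

definition normally_equivalent :: "'a::euclidean_space set \<Rightarrow> 'a set \<Rightarrow> bool" where
  "normally_equivalent P Q \<longleftrightarrow> normal_fan P = normal_fan Q"

definition comb_equivalent :: "'a::euclidean_space set \<Rightarrow> 'b::euclidean_space set \<Rightarrow> bool" where
  "comb_equivalent P Q \<longleftrightarrow>
     (\<exists>f. bij_betw f {F. F face_of P} {G. G face_of Q} \<and>
          (\<forall>F1 F2. F1 face_of P \<longrightarrow> F2 face_of P \<longrightarrow> (F1 \<subseteq> F2 \<longleftrightarrow> f F1 \<subseteq> f F2)))"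

end

theory Submission
  imports Defs
begin


definition inW :: "('m::finite \<Rightarrow> real^'n::finite) \<Rightarrow> real^'m \<Rightarrow> bool" where
  "inW u y \<longleftrightarrow> (\<Sum>i\<in>UNIV. (y $ i) *\<^sub>R u i) = 0"

definition supp :: "real^'m::finite \<Rightarrow> 'm set" where "supp y = {i. y $ i \<noteq> 0}"

definition conf :: "real^'m::finite \<Rightarrow> real^'m \<Rightarrow> bool" where
  "conf p y \<longleftrightarrow> (\<forall>i. p $ i = 0 \<or> 0 < p $ i * y $ i)"

definition cert :: "('m::finite \<Rightarrow> real^'n::finite) \<Rightarrow> real^'m \<Rightarrow> ('m \<Rightarrow> real) \<Rightarrow> real^'m \<Rightarrow> bool" where
 "cert u b s y \<longleftrightarrow> inW u y \<and> (\<forall>i. s i \<noteq> 0 \<longrightarrow> 0 \<le> s i * y $ i) \<and>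
    (0 < y \<bullet> b \<or> (y \<bullet> b = 0 \<and> (\<exists>i. s i \<noteq> 0 \<and> y $ i \<noteq> 0)))"

definition realizable :: "('m::finite \<Rightarrow> real^'n::finite) \<Rightarrow> real^'m \<Rightarrow> ('m \<Rightarrow> real) \<Rightarrow> bool" where
  "realizable u b s \<longleftrightarrow> (\<exists>x. \<forall>i. sgn (u i \<bullet> x - b $ i) = s i)"

lemma inW_diff: "inW u y \<Longrightarrow> inW u z \<Longrightarrow> inW u (y - r *\<^sub>R z)"
  unfolding inW_def by (simp add: scaleR_diff_left sum_subtractf flip: scaleR_scaleR scaleR_sum_right)

lemma inW_scale: "inW u z \<Longrightarrow> inW u (r *\<^sub>R z)"
  unfolding inW_def by (simp flip: scaleR_scaleR scaleR_sum_right)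

lemma inW_dep:
  assumes "inW u y" "y \<noteq> 0" "supp y \<subseteq> D"
  shows "lin_dep_family u D"
proof -
  have "(\<Sum>i\<in>D. (y $ i) *\<^sub>R u i) = (\<Sum>i\<in>UNIV. (y $ i) *\<^sub>R u i)"
    by (rule sum.mono_neutral_left) (use assms(3) in \<open>auto simp: supp_def\<close>)
  moreover obtain i where "y $ i \<noteq> 0" using assms(2) by (metis vec_eq_iff zero_index)
  ultimately show ?thesis unfolding lin_dep_family_def using assms
    by (intro exI[of _ "\<lambda>i. y $ i"]) (auto simp: supp_def inW_def)
qed

lemma circuit_in_supp:
  assumes "inW u y" "y \<noteq> 0"
  obtains C where "is_circuit u C" "C \<subseteq> supp y"
proof -
  let ?P = "\<lambda>D. D \<subseteq> supp y \<and> lin_dep_family u D"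
  have "?P (supp y)" using inW_dep[OF assms order_refl] by simp
  then obtain D where D: "?P D" and min: "\<forall>D'. ?P D' \<longrightarrow> card D \<le> card D'"
    using ex_has_least_nat[of ?P "supp y" card] by blast
  have "is_circuit u D"
    unfolding is_circuit_def
  proof (intro conjI allI impI)
    show "lin_dep_family u D" using D by simp
    fix D' assume "D' \<subset> D"
    then have "card D' < card D" by (simp add: psubset_card_mono)
    with min D \<open>D' \<subset> D\<close> show "\<not> lin_dep_family u D'"
      by (meson dual_order.trans leD psubset_imp_subset)
  qed
  then show ?thesis using that D by blast
qed

lemma circuit_zero:
  assumes "is_circuit u C" "inW u v" "supp v \<subseteq> C" "k \<in> C" "v $ k = 0"
  shows "v = 0"
proof (rule ccontr)
  assume "v \<noteq> 0"
  then have "lin_dep_family u (supp v)" using inW_dep assms by blast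
  moreover have "supp v \<subset> C" using assms by (auto simp: supp_def)
  ultimately show False using assms(1) by (auto simp: is_circuit_def)
qed

lemma cv_props:
  assumes "is_circuit_vector u C c"
  shows "inW u c" "supp c = C"
  using assms by (auto simp: is_circuit_vector_def inW_def supp_def)

lemma circuit_ne: "is_circuit u C \<Longrightarrow> C \<noteq> {}"
  by (auto simp: is_circuit_def lin_dep_family_def)

lemma cert_not_real:
  assumes c: "cert u b s y" shows "\<not> realizable u b s"
proof
  assume "realizable u b s"
  then obtain x where x: "\<And>i. sgn (u i \<bullet> x - b $ i) = s i" unfolding realizable_def by blast
  define w where "w i = u i \<bullet> x - b $ i" for i
  have W: "(\<Sum>i\<in>UNIV. (y $ i) *\<^sub>R u i) = 0" using c by (simp add: cert_def inW_def)
  have "(\<Sum>i\<in>UNIV. y $ i * (u i \<bullet> x)) = (\<Sum>i\<in>UNIV. (y $ i) *\<^sub>R u i) \<bullet> x"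
    by (simp add: inner_sum_left)
  also have "\<dots> = 0" using W by simp
  finally have s0: "(\<Sum>i\<in>UNIV. y $ i * (u i \<bullet> x)) = 0" .
  have "y \<bullet> b = (\<Sum>i\<in>UNIV. y $ i * b $ i)" by (simp add: inner_vec_def)
  then have yb: "y \<bullet> b = - (\<Sum>i\<in>UNIV. y $ i * w i)"
    by (simp add: w_def right_diff_distrib sum_subtractf s0)
  have nn: "0 \<le> y $ i * w i" for i
  proof (cases "s i = 0")
    case True then have "w i = 0" using x[of i] by (simp add: w_def sgn_eq_0_iff)
    then show ?thesis by simp
  next
    case False
    then have "0 \<le> s i * y $ i" using c by (simp add: cert_def)
    moreover have "w i = s i * \<bar>w i\<bar>" using x[of i] by (metis sgn_mult_abs w_def)
    ultimately show ?thesis by (metis abs_ge_zero mult.assoc mult.commute mult_nonneg_nonneg)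
  qed
  have sge: "0 \<le> (\<Sum>i\<in>UNIV. y $ i * w i)" by (simp add: nn sum_nonneg)
  show False
  proof (cases "0 < y \<bullet> b")
    case True then show False using yb sge by linarith
  next
    case False
    then obtain i where i: "s i \<noteq> 0" "y $ i \<noteq> 0" and yb0: "y \<bullet> b = 0" using c by (auto simp: cert_def)
    have "w i \<noteq> 0" using x[of i] i by (auto simp: w_def)
    have "s i = 1 \<or> s i = -1" using x[of i] i by (metis sgn_if)
    moreover have "0 \<le> s i * y $ i" using c i by (simp add: cert_def)
    moreover have "sgn (w i) = s i" using x[of i] by (simp add: w_def)
    ultimately have "0 < y $ i * w i" using i \<open>w i \<noteq> 0\<close>
    proof -
      have e: "y $ i * w i = (s i * y $ i) * \<bar>w i\<bar>"
        using \<open>sgn (w i) = s i\<close> by (metis sgn_mult_abs mult.commute mult.left_commute)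
      have "s i * y $ i \<noteq> 0" using i by simp
      then have "0 < s i * y $ i" using \<open>0 \<le> s i * y $ i\<close> by linarith
      then show ?thesis unfolding e using \<open>w i \<noteq> 0\<close> by simp
    qed
    moreover have "\<forall>j\<in>UNIV. 0 \<le> y $ j * w j" using nn by simp
    ultimately have "0 < (\<Sum>i\<in>UNIV. y $ i * w i)"
      using sum_pos2[of UNIV i "\<lambda>j. y $ j * w j"] by simp
    then show False using yb yb0 by linarith
  qed
qed


lemma conf_I: "(\<And>i. 0 \<le> p $ i * y $ i) \<Longrightarrow> (\<And>i. y $ i = 0 \<Longrightarrow> p $ i = 0) \<Longrightarrow> conf p y"
  unfolding conf_def by (metis less_eq_real_def mult_eq_0_iff)

lemma conf_supp: "conf p y \<Longrightarrow> supp p \<subseteq> supp y"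
  unfolding conf_def supp_def by force

lemma absmin_aux:
  fixes ri rk :: real assumes "\<bar>rk\<bar> \<le> \<bar>ri\<bar>" shows "0 \<le> ri * (ri - rk)"
proof -
  have "ri * rk \<le> \<bar>ri\<bar> * \<bar>rk\<bar>" by (metis abs_ge_self abs_mult)
  also have "\<dots> \<le> \<bar>ri\<bar> * \<bar>ri\<bar>" by (rule mult_left_mono[OF assms abs_ge_zero])
  also have "\<dots> = ri * ri" by simp
  finally show ?thesis by (simp add: algebra_simps)
qed

lemma decomp:
  assumes cvC: "is_circuit_vector u C c" and circ: "is_circuit u C"
    and W: "inW u y" and Csub: "C \<subseteq> supp y" and ne: "C \<noteq> supp y"
  shows "\<exists>p q \<alpha> \<beta>. 0 < \<alpha> \<and> 0 < \<beta> \<and> y = \<alpha> *\<^sub>R p + \<beta> *\<^sub>R q \<and> inW u p \<and> inW u q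
     \<and> conf p y \<and> conf q y \<and> supp p \<subset> supp y \<and> supp q \<subset> supp y"
proof -
  have cW: "inW u c" and sc: "supp c = C" using cv_props[OF cvC] by auto
  have Cne: "C \<noteq> {}" using circuit_ne[OF circ] .
  define r where "r j = y $ j / c $ j" for j
  have cnz: "c $ j \<noteq> 0" if "j \<in> C" for j using sc that by (auto simp: supp_def)
  have cz: "c $ j = 0" if "j \<notin> C" for j using sc that by (auto simp: supp_def)
  have yr: "y $ j = r j * c $ j" if "j \<in> C" for j using cnz[OF that] by (simp add: r_def)
  have rnz: "r j \<noteq> 0" if "j \<in> C" for j using that Csub cnz[OF that] by (auto simp: r_def supp_def)
  have key: "conf (y - r k *\<^sub>R c) y" if k: "k \<in> C" and mn: "\<And>i. i \<in> C \<Longrightarrow> 0 \<le> r i * (r i - r k)" for k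
  proof (rule conf_I)
    fix i
    show "0 \<le> (y - r k *\<^sub>R c) $ i * y $ i"
    proof (cases "i \<in> C")
      case True
      have "(y - r k *\<^sub>R c) $ i * y $ i = (c $ i * c $ i) * (r i * (r i - r k))"
        using yr[OF True] by (simp add: algebra_simps)
      then show ?thesis using mn[OF True] by simp
    next
      case False then show ?thesis using cz[OF False] by simp
    qed
  next
    fix i assume "y $ i = 0"
    then have "i \<notin> C" using Csub by (auto simp: supp_def)
    then show "(y - r k *\<^sub>R c) $ i = 0" using cz \<open>y $ i = 0\<close> by simp
  qed
  have ssub: "supp (y - r k *\<^sub>R c) \<subset> supp y" if k: "k \<in> C" and cf: "conf (y - r k *\<^sub>R c) y" for k
  proof -
    have "(y - r k *\<^sub>R c) $ k = 0" using cnz[OF k] by (simp add: r_def)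
    then have "k \<notin> supp (y - r k *\<^sub>R c)" by (simp add: supp_def)
    moreover have "k \<in> supp y" using k Csub by auto
    ultimately show ?thesis using conf_supp[OF cf] by blast
  qed
  obtain k where k: "k \<in> C" and kmin: "\<And>j. j \<in> C \<Longrightarrow> \<bar>r k\<bar> \<le> \<bar>r j\<bar>"
  proof -
    have "Min ((\<lambda>j. \<bar>r j\<bar>) ` C) \<in> (\<lambda>j. \<bar>r j\<bar>) ` C"
      by (rule Min_in) (use Cne in auto)
    then obtain k where "k \<in> C" "\<bar>r k\<bar> = Min ((\<lambda>j. \<bar>r j\<bar>) ` C)" by auto
    then show ?thesis using that by (simp add: Min_le)
  qed
  define p where "p = y - r k *\<^sub>R c"
  have pconf: "conf p y" unfolding p_def using key[OF k] absmin_aux kmin by blast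
  have pW: "inW u p" unfolding p_def by (rule inW_diff[OF W cW])
  have psub: "supp p \<subset> supp y" unfolding p_def by (rule ssub[OF k pconf[unfolded p_def]])
  show ?thesis
  proof (cases "\<forall>j\<in>C. 0 < r j * r k")
    case True
    define q where "q = r k *\<^sub>R c"
    have "conf q y"
    proof (rule conf_I)
      fix i show "0 \<le> q $ i * y $ i"
      proof (cases "i \<in> C")
        case True
        have "q $ i * y $ i = (c $ i * c $ i) * (r i * r k)"
          using yr[OF True] by (simp add: q_def algebra_simps)
        moreover have "0 < r i * r k" using \<open>\<forall>j\<in>C. 0 < r j * r k\<close> True by blast
        ultimately show ?thesis by simp
      next
        case False then show ?thesis using cz[OF False] by (simp add: q_def)
      qed
    next
      fix i assume "y $ i = 0"
      then have "i \<notin> C" using Csub by (auto simp: supp_def)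
      then show "q $ i = 0" using cz by (simp add: q_def)
    qed
    moreover have "supp q = C" using sc rnz[OF k] by (auto simp: q_def supp_def)
    moreover have "y = 1 *\<^sub>R p + 1 *\<^sub>R q" by (simp add: p_def q_def)
    moreover have "inW u q" unfolding q_def by (rule inW_scale[OF cW])
    ultimately show ?thesis using pconf pW psub Csub ne by (intro exI[of _ p] exI[of _ q] exI[of _ 1] exI[of _ 1]) auto
  next
    case False
    define L where "L = {j\<in>C. r j * r k < 0}"
    have Lne: "L \<noteq> {}" using False rnz k by (auto simp: L_def) (metis linorder_neqE_linordered_idom mult_eq_0_iff)
    obtain l where l: "l \<in> L" and lmin: "\<And>j. j \<in> L \<Longrightarrow> \<bar>r l\<bar> \<le> \<bar>r j\<bar>"
    proof -
      have "Min ((\<lambda>j. \<bar>r j\<bar>) ` L) \<in> (\<lambda>j. \<bar>r j\<bar>) ` L"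
        by (rule Min_in) (use Lne in auto)
      then obtain l where "l \<in> L" "\<bar>r l\<bar> = Min ((\<lambda>j. \<bar>r j\<bar>) ` L)" by auto
      then show ?thesis using that by (simp add: Min_le)
    qed
    have lC: "l \<in> C" and lk: "r l * r k < 0" using l by (auto simp: L_def)
    define q where "q = y - r l *\<^sub>R c"
    have mnl: "0 \<le> r i * (r i - r l)" if i: "i \<in> C" for i
    proof (cases "i \<in> L")
      case True then show ?thesis using absmin_aux lmin by blast
    next
      case False
      then have "0 \<le> r i * r k" using i by (auto simp: L_def)
      then have "0 < r i * r k" using rnz[OF i] rnz[OF k] by (simp add: less_eq_real_def)
      then have "r i * r l < 0" using lk
        by (auto simp: zero_less_mult_iff mult_less_0_iff)
      moreover have "0 \<le> r i * r i" by simp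
      ultimately have "r i * r l \<le> r i * r i" by linarith
      then show ?thesis by (simp add: algebra_simps)
    qed
    have qconf: "conf q y" unfolding q_def using key[OF lC] mnl by blast
    have qW: "inW u q" unfolding q_def by (rule inW_diff[OF W cW])
    have qsub: "supp q \<subset> supp y" unfolding q_def by (rule ssub[OF lC qconf[unfolded q_def]])
    define \<alpha> where "\<alpha> = r l / (r l - r k)"
    define \<beta> where "\<beta> = - r k / (r l - r k)"
    have d: "r l - r k \<noteq> 0" using lk by auto
    have "\<alpha> + \<beta> = (r l + - r k) / (r l - r k)" by (simp only: \<alpha>_def \<beta>_def add_divide_distrib)
    then have ab1: "\<alpha> + \<beta> = 1" using d by simp
    have ab2: "\<alpha> * r k + \<beta> * r l = 0" using d by (simp add: \<alpha>_def \<beta>_def field_simps)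
    have apos: "0 < \<alpha>" and bpos: "0 < \<beta>" using lk
      by (auto simp: \<alpha>_def \<beta>_def zero_less_divide_iff divide_less_0_iff mult_less_0_iff)
    have "y = \<alpha> *\<^sub>R p + \<beta> *\<^sub>R q"
    proof (subst vec_eq_iff, intro allI)
      fix i
      have "(\<alpha> *\<^sub>R p + \<beta> *\<^sub>R q) $ i = (\<alpha> + \<beta>) * y $ i - (\<alpha> * r k + \<beta> * r l) * c $ i"
        by (simp add: p_def q_def algebra_simps)
      then show "y $ i = (\<alpha> *\<^sub>R p + \<beta> *\<^sub>R q) $ i" using ab1 ab2 by simp
    qed
    then show ?thesis using apos bpos pW qW pconf qconf psub qsub
      by (intro exI[of _ p] exI[of _ q] exI[of _ \<alpha>] exI[of _ \<beta>]) simp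
  qed
qed

lemma cert_split:
  assumes c: "cert u b s y" and y: "y = \<alpha> *\<^sub>R p + \<beta> *\<^sub>R q" and a: "0 < \<alpha>" "0 < \<beta>"
    and W: "inW u p" "inW u q" and cf: "conf p y" "conf q y"
  shows "cert u b s p \<or> cert u b s q"
proof -
  have sgnc: "\<forall>i. s i \<noteq> 0 \<longrightarrow> 0 \<le> s i * z $ i" if cz: "conf z y" for z
  proof (intro allI impI)
    fix i assume "s i \<noteq> 0"
    then have sy: "0 \<le> s i * y $ i" using c by (simp add: cert_def)
    show "0 \<le> s i * z $ i"
    proof (cases "z $ i = 0")
      case False
      then have zy: "0 < z $ i * y $ i" using cz by (auto simp: conf_def)
      have eq: "(s i * z $ i) * (z $ i * y $ i) = (s i * y $ i) * (z $ i * z $ i)" by (simp add: algebra_simps)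
      have "0 \<le> (s i * y $ i) * (z $ i * z $ i)" using sy by simp
      then have "0 \<le> (s i * z $ i) * (z $ i * y $ i)" unfolding eq .
      then show ?thesis using zy by (simp add: zero_le_mult_iff)
    qed simp
  qed
  have yb: "y \<bullet> b = \<alpha> * (p \<bullet> b) + \<beta> * (q \<bullet> b)" using y by (simp add: inner_add_left)
  show ?thesis
  proof (cases "0 < p \<bullet> b \<or> 0 < q \<bullet> b")
    case True then show ?thesis using W sgnc cf by (auto simp: cert_def)
  next
    case False
    then have pb: "p \<bullet> b \<le> 0" and qb: "q \<bullet> b \<le> 0" by auto
    have "\<alpha> * (p \<bullet> b) \<le> 0" "\<beta> * (q \<bullet> b) \<le> 0" using pb qb a by (auto simp: mult_nonneg_nonpos)
    then have "\<not> 0 < y \<bullet> b" using yb by linarith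
    then obtain i where i: "s i \<noteq> 0" "y $ i \<noteq> 0" and yb0: "y \<bullet> b = 0" using c by (auto simp: cert_def)
    have "\<alpha> * (p \<bullet> b) = 0" "\<beta> * (q \<bullet> b) = 0" using yb yb0 \<open>\<alpha> * (p \<bullet> b) \<le> 0\<close> \<open>\<beta> * (q \<bullet> b) \<le> 0\<close> by linarith+
    then have "p \<bullet> b = 0" "q \<bullet> b = 0" using a by auto
    moreover have "p $ i \<noteq> 0 \<or> q $ i \<noteq> 0" using i y by auto
    ultimately show ?thesis using W sgnc cf i by (auto simp: cert_def)
  qed
qed

lemma cert_reduce:
  assumes cv: "\<forall>C. is_circuit u C \<longrightarrow> is_circuit_vector u C (cv C)"
  shows "cert u b s y \<Longrightarrow> \<exists>C t. is_circuit u C \<and> cert u b s (t *\<^sub>R cv C)"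
proof (induction "card (supp y)" arbitrary: y rule: less_induct)
  case less
  have W: "inW u y" using less.prems by (simp add: cert_def)
  have y0: "y \<noteq> 0" using less.prems by (auto simp: cert_def)
  obtain C where C: "is_circuit u C" "C \<subseteq> supp y" using circuit_in_supp[OF W y0] by blast
  have cvC: "is_circuit_vector u C (cv C)" using cv C by blast
  show ?case
  proof (cases "C = supp y")
    case True
    obtain k where k: "k \<in> C" using circuit_ne[OF C(1)] by blast
    have ck: "cv C $ k \<noteq> 0" using cv_props(2)[OF cvC] k by (auto simp: supp_def)
    define t where "t = y $ k / cv C $ k"
    define v where "v = y - t *\<^sub>R cv C"
    have "v = 0"
    proof (rule circuit_zero[OF C(1) _ _ k])
      show "inW u v" unfolding v_def by (rule inW_diff[OF W cv_props(1)[OF cvC]])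
      show "supp v \<subseteq> C"
      proof
        fix i assume "i \<in> supp v"
        then have "y $ i \<noteq> 0 \<or> cv C $ i \<noteq> 0" by (auto simp: v_def supp_def)
        moreover have "supp (cv C) = C" by (rule cv_props(2)[OF cvC])
        ultimately show "i \<in> C" using True unfolding supp_def by blast
      qed
      show "v $ k = 0" using ck by (simp add: v_def t_def)
    qed
    then have "y = t *\<^sub>R cv C" by (simp add: v_def)
    then have "cert u b s (t *\<^sub>R cv C)" using less.prems by simp
    then show ?thesis using C(1) by blast
  next
    case False
    obtain p q \<alpha> \<beta> where d: "0 < \<alpha>" "0 < \<beta>" "y = \<alpha> *\<^sub>R p + \<beta> *\<^sub>R q" "inW u p" "inW u q"
      "conf p y" "conf q y" "supp p \<subset> supp y" "supp q \<subset> supp y"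
      using decomp[OF cvC C(1) W C(2) False] by blast
    have "cert u b s p \<or> cert u b s q" using cert_split[OF less.prems d(3) d(1,2) d(4,5) d(6,7)] .
    moreover have "card (supp p) < card (supp y)" "card (supp q) < card (supp y)"
      using d(8,9) by (simp_all add: psubset_card_mono)
    ultimately show ?thesis using less.hyps[of p] less.hyps[of q] by blast
  qed
qed

lemma cert_transfer0:
  assumes "cert u b s y" "sgn (y \<bullet> a) = sgn (y \<bullet> b)"
  shows "cert u a s y"
proof -
  have eqs: "(0 < y \<bullet> a) = (0 < y \<bullet> b)" "(y \<bullet> a = 0) = (y \<bullet> b = 0)"
    using assms(2) by (metis sgn_greater sgn_0_0 sgn_zero_iff)+
  show ?thesis unfolding cert_def eqs using assms(1) unfolding cert_def .
qed

lemma cert_transfer: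
  assumes "sgn (c \<bullet> a) = sgn (c \<bullet> b)" "cert u b s (t *\<^sub>R c)"
  shows "cert u a s (t *\<^sub>R c)"
  by (rule cert_transfer0[OF assms(2)]) (simp add: sgn_mult assms(1))


lemma motzkin:
  fixes u :: "'m::finite \<Rightarrow> real^'n::finite" and b :: "real^'m"
  assumes sv: "\<And>i. s i = -1 \<or> s i = 0 \<or> s i = 1" and nr: "\<not> realizable u b s"
  shows "\<exists>y. cert u b s y"
proof -
  define g :: "'m \<Rightarrow> (real^'n) \<times> real" where "g i = (u i, - (b $ i))" for i
  define N where "N = {i. s i \<noteq> 0}"
  define Z where "Z = {i. s i = 0}"
  define kk :: "'m option \<Rightarrow> (real^'n) \<times> real"
    where "kk j = (case j of None \<Rightarrow> (0, 1) | Some i \<Rightarrow> s i *\<^sub>R g i)" for j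
  define \<Omega> where "\<Omega> = insert None (Some ` N)"
  define H where "H = {p. \<exists>w. (\<forall>j\<in>\<Omega>. 0 \<le> w j) \<and> sum w \<Omega> = 1 \<and> p = (\<Sum>j\<in>\<Omega>. w j *\<^sub>R kk j)}"
  define V where "V = span (g ` Z)"
  define M where "M = {p. \<exists>\<mu>. p = (\<Sum>i\<in>Z. \<mu> i *\<^sub>R g i)}"
  have finO: "finite \<Omega>" by (simp add: \<Omega>_def)
  have convH: "convex H"
  proof (rule convexI)
    fix x y and a1 a2 :: real
    assume "x \<in> H" "y \<in> H" and a: "0 \<le> a1" "0 \<le> a2" "a1 + a2 = 1"
    then obtain w w' where w: "\<forall>j\<in>\<Omega>. 0 \<le> w j" "sum w \<Omega> = 1" "x = (\<Sum>j\<in>\<Omega>. w j *\<^sub>R kk j)"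
      and w': "\<forall>j\<in>\<Omega>. 0 \<le> w' j" "sum w' \<Omega> = 1" "y = (\<Sum>j\<in>\<Omega>. w' j *\<^sub>R kk j)"
      unfolding H_def by blast
    have c1: "\<forall>j\<in>\<Omega>. 0 \<le> a1 * w j + a2 * w' j" using w w' a by simp
    have c2: "(\<Sum>j\<in>\<Omega>. a1 * w j + a2 * w' j) = 1" using w w' a by (simp add: sum.distrib flip: sum_distrib_left)
    have c3: "a1 *\<^sub>R x + a2 *\<^sub>R y = (\<Sum>j\<in>\<Omega>. (a1 * w j + a2 * w' j) *\<^sub>R kk j)"
      using w w' by (simp add: scaleR_add_left sum.distrib scaleR_sum_right)
    show "a1 *\<^sub>R x + a2 *\<^sub>R y \<in> H"
      unfolding H_def mem_Collect_eq
      by (intro exI[of _ "\<lambda>j. a1 * w j + a2 * w' j"] conjI c1 c2 c3)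
  qed
  have kkH: "kk ` \<Omega> \<subseteq> H"
  proof
    fix p assume "p \<in> kk ` \<Omega>"
    then obtain j0 where j0: "j0 \<in> \<Omega>" "p = kk j0" by blast
    have "(\<Sum>j\<in>\<Omega>. (if j = j0 then 1 else 0) *\<^sub>R kk j) = (\<Sum>j\<in>\<Omega>. if j = j0 then kk j else 0)"
      by (rule sum.cong) auto
    also have "\<dots> = kk j0" using j0 finO by simp
    finally show "p \<in> H" unfolding H_def using j0 finO
      by (intro CollectI exI[of _ "\<lambda>j. if j = j0 then 1 else 0"]) auto
  qed
  have hullH: "convex hull (kk ` \<Omega>) \<subseteq> H" by (rule hull_minimal[where S=convex, OF kkH convH])
  have subM: "subspace M"
    unfolding subspace_def M_def
  proof (intro conjI ballI allI)
    show "0 \<in> {p. \<exists>\<mu>. p = (\<Sum>i\<in>Z. \<mu> i *\<^sub>R g i)}" by (intro CollectI exI[of _ "\<lambda>i. 0"]) simp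
  next
    fix x y assume "x \<in> {p. \<exists>\<mu>. p = (\<Sum>i\<in>Z. \<mu> i *\<^sub>R g i)}" "y \<in> {p. \<exists>\<mu>. p = (\<Sum>i\<in>Z. \<mu> i *\<^sub>R g i)}"
    then obtain \<mu> \<mu>' where "x = (\<Sum>i\<in>Z. \<mu> i *\<^sub>R g i)" "y = (\<Sum>i\<in>Z. \<mu>' i *\<^sub>R g i)" by blast
    then show "x + y \<in> {p. \<exists>\<mu>. p = (\<Sum>i\<in>Z. \<mu> i *\<^sub>R g i)}"
      by (intro CollectI exI[of _ "\<lambda>i. \<mu> i + \<mu>' i"]) (simp add: scaleR_add_left sum.distrib)
  next
    fix c x assume "x \<in> {p. \<exists>\<mu>. p = (\<Sum>i\<in>Z. \<mu> i *\<^sub>R g i)}"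
    then obtain \<mu> where "x = (\<Sum>i\<in>Z. \<mu> i *\<^sub>R g i)" by blast
    then show "c *\<^sub>R x \<in> {p. \<exists>\<mu>. p = (\<Sum>i\<in>Z. \<mu> i *\<^sub>R g i)}"
      by (intro CollectI exI[of _ "\<lambda>i. c * \<mu> i"]) (simp add: scaleR_sum_right)
  qed
  have gM: "g ` Z \<subseteq> M"
  proof
    fix p assume "p \<in> g ` Z"
    then obtain i0 where i0: "i0 \<in> Z" "p = g i0" by blast
    have "(\<Sum>i\<in>Z. (if i = i0 then 1 else 0) *\<^sub>R g i) = (\<Sum>i\<in>Z. if i = i0 then g i else 0)"
      by (rule sum.cong) auto
    also have "\<dots> = g i0" using i0 by simp
    finally show "p \<in> M" unfolding M_def using i0
      by (intro CollectI exI[of _ "\<lambda>i. if i = i0 then 1 else 0"]) auto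
  qed
  have VM: "V \<subseteq> M" unfolding V_def by (rule span_minimal[OF gM subM])
  show ?thesis
  proof (cases "convex hull (kk ` \<Omega>) \<inter> V = {}")
    case True
    have "\<exists>a0 d. (\<forall>x\<in>convex hull (kk ` \<Omega>). inner a0 x < d) \<and> (\<forall>x\<in>V. inner a0 x > d)"
    proof (rule separating_hyperplane_compact_closed)
      show "convex (convex hull (kk ` \<Omega>))" by simp
      show "compact (convex hull (kk ` \<Omega>))" using finO by (simp add: compact_convex_hull finite_imp_compact)
      show "convex hull (kk ` \<Omega>) \<noteq> {}" by (simp add: \<Omega>_def)
      show "convex V" unfolding V_def by (simp add: subspace_imp_convex)
      show "closed V" unfolding V_def by simp
    qed fact
    then obtain a0 d where sepS: "\<And>x. x \<in> convex hull (kk ` \<Omega>) \<Longrightarrow> inner a0 x < d"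
      and sepV: "\<And>x. x \<in> V \<Longrightarrow> inner a0 x > d" by blast
    have d0: "d < 0" using sepV[of 0] by (simp add: V_def span_zero)
    have orth: "inner a0 v = 0" if v: "v \<in> V" for v
    proof (rule ccontr)
      assume nz: "inner a0 v \<noteq> 0"
      define t where "t = (d - 1) / inner a0 v"
      have "t *\<^sub>R v \<in> V" using v by (simp add: V_def span_scale)
      then have "d < inner a0 (t *\<^sub>R v)" by (rule sepV)
      moreover have "inner a0 (t *\<^sub>R v) = d - 1" using nz by (simp add: t_def)
      ultimately show False by simp
    qed
    define z where "z = - a0"
    define x0 where "x0 = fst z"
    define \<tau> where "\<tau> = snd z"
    have zeq: "inner z (p, r) = inner x0 p + \<tau> * r" for p r
      by (cases z) (simp add: x0_def \<tau>_def)
    have kkpos: "0 < inner z (kk j)" if "j \<in> \<Omega>" for j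
    proof -
      have "kk j \<in> convex hull (kk ` \<Omega>)" using that by (simp add: hull_inc)
      then have "inner a0 (kk j) < d" by (rule sepS)
      then show ?thesis using d0 by (simp add: z_def)
    qed
    have tau: "0 < \<tau>" using kkpos[of None] by (simp add: \<Omega>_def kk_def zeq)
    have zg: "inner z (g i) = inner x0 (u i) - \<tau> * b $ i" for i by (simp add: g_def zeq)
    define x where "x = (1 / \<tau>) *\<^sub>R x0"
    have "realizable u b s"
      unfolding realizable_def
    proof (intro exI[of _ x] allI)
      fix i
      have e: "u i \<bullet> x - b $ i = inner z (g i) / \<tau>"
        using tau by (simp add: x_def zg inner_commute field_simps)
      show "sgn (u i \<bullet> x - b $ i) = s i"
      proof (cases "s i = 0")
        case True
        then have "g i \<in> V" by (simp add: V_def Z_def span_base)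
        then have "inner z (g i) = 0" using orth by (simp add: z_def)
        then show ?thesis using e True by simp
      next
        case False
        then have "Some i \<in> \<Omega>" by (simp add: \<Omega>_def N_def)
        then have "0 < inner z (kk (Some i))" by (rule kkpos)
        then have "0 < s i * inner z (g i)" by (simp add: kk_def)
        then have "sgn (inner z (g i)) = s i" using sv[of i] False
          by (auto simp: zero_less_mult_iff sgn_if)
        then show ?thesis using e tau by (simp add: sgn_divide)
      qed
    qed
    then show ?thesis using nr by blast
  next
    case False
    then obtain p where pH: "p \<in> H" and pM: "p \<in> M" using hullH VM by blast
    obtain w where w: "\<forall>j\<in>\<Omega>. 0 \<le> w j" "sum w \<Omega> = 1" "p = (\<Sum>j\<in>\<Omega>. w j *\<^sub>R kk j)"
      using pH unfolding H_def by blast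
    obtain \<mu> where mu: "p = (\<Sum>i\<in>Z. \<mu> i *\<^sub>R g i)" using pM unfolding M_def by blast
    have nn: "None \<notin> Some ` N" by auto
    have sumO: "sum f \<Omega> = f None + (\<Sum>i\<in>N. f (Some i))" for f :: "'m option \<Rightarrow> 'z::comm_monoid_add"
      unfolding \<Omega>_def using nn by (simp add: sum.reindex)
    define yv :: "real^'m" where "yv = (\<chi> i. if s i \<noteq> 0 then w (Some i) * s i else - \<mu> i)"
    have "(\<Sum>i\<in>UNIV. yv $ i *\<^sub>R g i) = (\<Sum>i\<in>UNIV. if s i \<noteq> 0 then (w (Some i) * s i) *\<^sub>R g i else (- \<mu> i) *\<^sub>R g i)"
      by (rule sum.cong) (auto simp: yv_def)
    also have "\<dots> = (\<Sum>i\<in>N. (w (Some i) * s i) *\<^sub>R g i) + (\<Sum>i\<in>Z. (- \<mu> i) *\<^sub>R g i)"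
      by (simp add: sum.If_cases N_def Z_def Compl_eq)
    also have "(\<Sum>i\<in>N. (w (Some i) * s i) *\<^sub>R g i) = p - w None *\<^sub>R (0, 1)"
      using w(3) by (simp add: sumO kk_def)
    also have "(\<Sum>i\<in>Z. (- \<mu> i) *\<^sub>R g i) = - p" using mu by (simp add: sum_negf)
    finally have key: "(\<Sum>i\<in>UNIV. yv $ i *\<^sub>R g i) = - (w None *\<^sub>R (0, 1))" by simp
    have "fst (\<Sum>i\<in>UNIV. yv $ i *\<^sub>R g i) = (\<Sum>i\<in>UNIV. yv $ i *\<^sub>R u i)"
      by (simp add: fst_sum g_def)
    then have W: "inW u yv" using key by (simp add: inW_def)
    have "snd (\<Sum>i\<in>UNIV. yv $ i *\<^sub>R g i) = - (\<Sum>i\<in>UNIV. yv $ i * b $ i)"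
      by (simp add: snd_sum g_def sum_negf)
    then have "(\<Sum>i\<in>UNIV. yv $ i * b $ i) = w None" using key by simp
    then have yb: "yv \<bullet> b = w None" by (simp add: inner_vec_def)
    have sgc: "\<forall>i. s i \<noteq> 0 \<longrightarrow> 0 \<le> s i * yv $ i"
    proof (intro allI impI)
      fix i assume si: "s i \<noteq> 0"
      then have "Some i \<in> \<Omega>" by (simp add: \<Omega>_def N_def)
      then have "0 \<le> w (Some i)" using w(1) by blast
      moreover have "s i * s i = 1" using sv[of i] si by auto
      moreover have "s i * yv $ i = (s i * s i) * w (Some i)" using si by (simp add: yv_def)
      ultimately show "0 \<le> s i * yv $ i" by simp
    qed
    have w0: "0 \<le> w None" using w(1) by (simp add: \<Omega>_def)
    have "cert u b s yv"
    proof (cases "0 < w None")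
      case True then show ?thesis using W sgc yb by (simp add: cert_def)
    next
      case False
      then have wn: "w None = 0" using w0 by simp
      then have "(\<Sum>i\<in>N. w (Some i)) = 1" using w(2) sumO[of w] by simp
      then obtain i where i: "i \<in> N" "w (Some i) \<noteq> 0" by (metis sum.neutral zero_neq_one)
      then have "s i \<noteq> 0" "yv $ i \<noteq> 0" by (auto simp: N_def yv_def)
      then show ?thesis using W sgc yb wn by (auto simp: cert_def)
    qed
    then show ?thesis by blast
  qed
qed


lemma main_lemma:
  assumes cv: "\<forall>C. is_circuit u C \<longrightarrow> is_circuit_vector u C (cv C)"
    and hsg: "\<forall>C. is_circuit u C \<longrightarrow> sgn (cv C \<bullet> a) = sgn (cv C \<bullet> b)"
    and ra: "realizable u a s"
  shows "realizable u b s"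
proof (rule ccontr)
  assume nr: "\<not> realizable u b s"
  obtain x where x: "\<And>i. sgn (u i \<bullet> x - a $ i) = s i" using ra unfolding realizable_def by blast
  have sv: "s i = -1 \<or> s i = 0 \<or> s i = 1" for i
    unfolding x[of i, symmetric] by (simp add: sgn_if)
  obtain y where "cert u b s y" using motzkin[OF sv nr] by blast
  then obtain C t where C: "is_circuit u C" "cert u b s (t *\<^sub>R cv C)" using cert_reduce[OF cv] by blast
  then have "cert u a s (t *\<^sub>R cv C)" using cert_transfer hsg by blast
  then show False using cert_not_real ra by blast
qed

definition sig :: "('m::finite \<Rightarrow> real^'n::finite) \<Rightarrow> real^'m \<Rightarrow> real^'n \<Rightarrow> 'm \<Rightarrow> real" where
  "sig u a x = (\<lambda>i. sgn (u i \<bullet> x - a $ i))"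

lemma transfer:
  assumes cv: "\<forall>C. is_circuit u C \<longrightarrow> is_circuit_vector u C (cv C)"
    and hsg: "\<forall>C. is_circuit u C \<longrightarrow> sgn (cv C \<bullet> a) = sgn (cv C \<bullet> b)"
    and "\<Phi> (sig u a x)"
  shows "\<exists>y. \<Phi> (sig u b y)"
proof -
  have "realizable u a (sig u a x)" unfolding realizable_def sig_def by blast
  then have "realizable u b (sig u a x)" by (rule main_lemma[OF cv hsg])
  then obtain y where "\<And>i. sgn (u i \<bullet> y - b $ i) = sig u a x i" unfolding realizable_def by blast
  then have "sig u b y = sig u a x" unfolding sig_def by auto
  then show ?thesis using assms(3) by metis
qed



definition compat :: "'m set \<Rightarrow> 'm set \<Rightarrow> 'm set \<Rightarrow> ('m \<Rightarrow> real) \<Rightarrow> bool" where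
  "compat I J K \<sigma> \<longleftrightarrow> (\<forall>i\<in>I. \<sigma> i = 0) \<and> (\<forall>i\<in>J. \<sigma> i \<le> 0) \<and> (\<forall>i\<in>K. 0 \<le> \<sigma> i)"

lemma polyP_sig: "x \<in> polyP u a I J K \<longleftrightarrow> compat I J K (sig u a x)"
  by (simp add: polyP_def compat_def sig_def sgn_le_0_iff sgn_zero_iff)

lemma sig_zero: "sig u a x i = 0 \<longleftrightarrow> u i \<bullet> x = a $ i"
  by (simp add: sig_def sgn_zero_iff)

definition FF :: "('m::finite \<Rightarrow> real^'n::finite) \<Rightarrow> real^'m \<Rightarrow> 'm set \<Rightarrow> 'm set \<Rightarrow> 'm set \<Rightarrow> 'm set \<Rightarrow> (real^'n) set" where
  "FF u a I J K S = {x \<in> polyP u a I J K. \<forall>i\<in>S. u i \<bullet> x = a $ i}"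

lemma convex_polyP: "convex (polyP u a I J K)"
proof -
  have "polyP u a I J K = (\<Inter>i\<in>I. {x. u i \<bullet> x = a $ i}) \<inter> (\<Inter>i\<in>J. {x. u i \<bullet> x \<le> a $ i})
      \<inter> (\<Inter>i\<in>K. {x. u i \<bullet> x \<ge> a $ i})" by (auto simp: polyP_def)
  then show ?thesis
    by (simp add: convex_Int convex_INT convex_hyperplane convex_halfspace_le convex_halfspace_ge)
qed

lemma face_FF:
  assumes part: "I \<union> J \<union> K = UNIV"
  shows "FF u a I J K S face_of polyP u a I J K"
proof (cases "S = {}")
  case True
  then show ?thesis by (simp add: FF_def face_of_refl convex_polyP)
next
  case False
  let ?P = "polyP u a I J K"
  have fi: "?P \<inter> {x. u i \<bullet> x = a $ i} face_of ?P" for i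
  proof -
    have "i \<in> I \<or> i \<in> J \<or> i \<in> K" using part by auto
    then show ?thesis
    proof (elim disjE)
      assume "i \<in> I"
      then have "?P \<inter> {x. u i \<bullet> x = a $ i} = ?P" by (auto simp: polyP_def)
      then show ?thesis by (simp add: face_of_refl convex_polyP)
    next
      assume "i \<in> J"
      then show ?thesis by (intro face_of_Int_supporting_hyperplane_le convex_polyP) (auto simp: polyP_def)
    next
      assume "i \<in> K"
      then show ?thesis by (intro face_of_Int_supporting_hyperplane_ge convex_polyP) (auto simp: polyP_def)
    qed
  qed
  have "FF u a I J K S = \<Inter>((\<lambda>i. ?P \<inter> {x. u i \<bullet> x = a $ i}) ` S)"
    using False by (auto simp: FF_def)
  also have "\<dots> face_of ?P" by (rule face_of_Inter) (use False fi in auto)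
  finally show ?thesis .
qed

lemma ev_le:
  fixes c r t :: real
  assumes "c \<le> r" "c = r \<Longrightarrow> t \<le> 0"
  shows "\<forall>\<^sub>F e in at_right 0. c + e * t \<le> r"
proof (cases "c = r")
  case True
  show ?thesis
    by (rule eventually_mono[OF eventually_at_right_less]) (use True assms(2) in \<open>simp add: mult_nonneg_nonpos\<close>)
next
  case False
  then have "c < r" using assms(1) by simp
  have "((\<lambda>e. c + e * t) \<longlongrightarrow> c + 0 * t) (at_right 0)" by (intro tendsto_intros)
  then have "((\<lambda>e. c + e * t) \<longlongrightarrow> c) (at_right 0)" by simp
  from order_tendstoD(2)[OF this \<open>c < r\<close>] show ?thesis by (rule eventually_mono) simp
qed

lemma ev_ge:
  fixes c r t :: real
  assumes "r \<le> c" "c = r \<Longrightarrow> 0 \<le> t"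
  shows "\<forall>\<^sub>F e in at_right 0. r \<le> c + e * t"
proof -
  have "\<forall>\<^sub>F e in at_right 0. (-c) + e * (-t) \<le> -r" by (rule ev_le) (use assms in auto)
  then show ?thesis by (rule eventually_mono) simp
qed

lemma ev_step:
  assumes x: "x \<in> polyP u a I J K"
    and dI: "\<forall>i\<in>I. u i \<bullet> d = 0"
    and dJ: "\<forall>i\<in>J. u i \<bullet> x = a $ i \<longrightarrow> u i \<bullet> d \<le> 0"
    and dK: "\<forall>i\<in>K. u i \<bullet> x = a $ i \<longrightarrow> u i \<bullet> d \<ge> 0"
  shows "\<exists>e>0. x + e *\<^sub>R d \<in> polyP u a I J K"
proof -
  have ev: "\<forall>\<^sub>F e in at_right 0. (i \<in> I \<longrightarrow> u i \<bullet> x + e * (u i \<bullet> d) = a $ i)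
      \<and> (i \<in> J \<longrightarrow> u i \<bullet> x + e * (u i \<bullet> d) \<le> a $ i) \<and> (i \<in> K \<longrightarrow> a $ i \<le> u i \<bullet> x + e * (u i \<bullet> d))" for i
  proof (intro eventually_conj)
    show "\<forall>\<^sub>F e in at_right 0. i \<in> I \<longrightarrow> u i \<bullet> x + e * (u i \<bullet> d) = a $ i"
      by (rule always_eventually) (use x dI in \<open>auto simp: polyP_def\<close>)
    show "\<forall>\<^sub>F e in at_right 0. i \<in> J \<longrightarrow> u i \<bullet> x + e * (u i \<bullet> d) \<le> a $ i"
    proof (cases "i \<in> J")
      case True
      then show ?thesis using ev_le[of "u i \<bullet> x" "a $ i" "u i \<bullet> d"] x dJ by (auto simp: polyP_def)
    qed simp
    show "\<forall>\<^sub>F e in at_right 0. i \<in> K \<longrightarrow> a $ i \<le> u i \<bullet> x + e * (u i \<bullet> d)"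
    proof (cases "i \<in> K")
      case True
      then show ?thesis using ev_ge[of "a $ i" "u i \<bullet> x" "u i \<bullet> d"] x dK by (auto simp: polyP_def)
    qed simp
  qed
  have "\<forall>\<^sub>F e in at_right 0. 0 < e \<and> (\<forall>i. (i \<in> I \<longrightarrow> u i \<bullet> x + e * (u i \<bullet> d) = a $ i)
      \<and> (i \<in> J \<longrightarrow> u i \<bullet> x + e * (u i \<bullet> d) \<le> a $ i) \<and> (i \<in> K \<longrightarrow> a $ i \<le> u i \<bullet> x + e * (u i \<bullet> d)))"
    by (intro eventually_conj eventually_at_right_less eventually_all_finite ev)
  then obtain e where "0 < e" and e: "\<forall>i. (i \<in> I \<longrightarrow> u i \<bullet> x + e * (u i \<bullet> d) = a $ i)
      \<and> (i \<in> J \<longrightarrow> u i \<bullet> x + e * (u i \<bullet> d) \<le> a $ i) \<and> (i \<in> K \<longrightarrow> a $ i \<le> u i \<bullet> x + e * (u i \<bullet> d))"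
    using eventually_happens'[of "at_right (0::real)"] by auto
  then show ?thesis by (intro exI[of _ e]) (simp add: polyP_def inner_add_right)
qed


lemma face_is_FF:
  assumes part: "I \<union> J \<union> K = UNIV" and C: "C face_of polyP u a I J K" and ne: "C \<noteq> {}"
  obtains x where "x \<in> rel_interior C" "C = FF u a I J K {i. u i \<bullet> x = a $ i}"
proof -
  let ?P = "polyP u a I J K"
  have "convex C" using face_of_imp_convex[OF C] .
  then obtain x where x: "x \<in> rel_interior C" using rel_interior_eq_empty ne by blast
  have xC: "x \<in> C" using x rel_interior_subset by blast
  have CP: "C \<subseteq> ?P" using face_of_imp_subset[OF C] .
  let ?T = "{i. u i \<bullet> x = a $ i}"
  have fT: "FF u a I J K ?T face_of ?P" by (rule face_FF[OF part])
  have xF: "x \<in> FF u a I J K ?T" using xC CP by (auto simp: FF_def)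
  have "C \<subseteq> FF u a I J K ?T" by (rule subset_of_face_of[OF fT CP]) (use xF x in blast)
  moreover have "FF u a I J K ?T \<subseteq> C"
  proof
    fix z assume z: "z \<in> FF u a I J K ?T"
    show "z \<in> C"
    proof (cases "z = x")
      case True then show ?thesis using xC by simp
    next
      case False
      have zP: "z \<in> ?P" and zt: "\<forall>i\<in>?T. u i \<bullet> z = a $ i" using z by (auto simp: FF_def)
      have xP: "x \<in> ?P" using xC CP by blast
      obtain e where e: "e > 0" "x + e *\<^sub>R (x - z) \<in> ?P"
      proof -
        have "\<exists>e>0. x + e *\<^sub>R (x - z) \<in> ?P"
        proof (rule ev_step[OF xP])
          show "\<forall>i\<in>I. u i \<bullet> (x - z) = 0" using xP zP by (auto simp: polyP_def inner_diff_right)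
          show "\<forall>i\<in>J. u i \<bullet> x = a $ i \<longrightarrow> u i \<bullet> (x - z) \<le> 0" using zt by (auto simp: inner_diff_right)
          show "\<forall>i\<in>K. u i \<bullet> x = a $ i \<longrightarrow> u i \<bullet> (x - z) \<ge> 0" using zt by (auto simp: inner_diff_right)
        qed
        then show ?thesis using that by blast
      qed
      define w where "w = x + e *\<^sub>R (x - z)"
      have wP: "w \<in> ?P" using e by (simp add: w_def)
      have wz: "w - z = (1 + e) *\<^sub>R (x - z)" by (simp add: w_def algebra_simps)
      have "z \<noteq> w"
      proof
        assume "z = w"
        then have "(1 + e) *\<^sub>R (x - z) = 0" using wz by simp
        then show False using e(1) False by simp
      qed
      define \<theta> where "\<theta> = 1 / (1 + e)"
      have th: "0 < \<theta>" "\<theta> < 1" using e(1) by (auto simp: \<theta>_def)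
      have h: "\<theta> * (1 + e) = 1" using e(1) by (simp add: \<theta>_def)
      have "(1 - \<theta>) *\<^sub>R z + \<theta> *\<^sub>R w = (\<theta> * (1 + e)) *\<^sub>R x + (1 - \<theta> * (1 + e)) *\<^sub>R z"
        by (simp add: w_def algebra_simps)
      then have "x = (1 - \<theta>) *\<^sub>R z + \<theta> *\<^sub>R w" using h by simp
      then have "x \<in> open_segment z w" using th \<open>z \<noteq> w\<close> by (auto simp: in_segment)
      then show "z \<in> C" using face_ofD[OF C _ zP wP xC] by blast
    qed
  qed
  ultimately show ?thesis using that x by blast
qed

definition NC :: "('m::finite \<Rightarrow> real^'n::finite) \<Rightarrow> 'm set \<Rightarrow> 'm set \<Rightarrow> 'm set \<Rightarrow> 'm set \<Rightarrow> (real^'n) set" where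
 "NC u I J K Z = {v. \<forall>d. (\<forall>i\<in>I. u i \<bullet> d = 0) \<and> (\<forall>i\<in>J\<inter>Z. u i \<bullet> d \<le> 0) \<and> (\<forall>i\<in>K\<inter>Z. 0 \<le> u i \<bullet> d) \<longrightarrow> v \<bullet> d \<le> 0}"

lemma normal_cone_alt:
  assumes "x \<in> P" shows "normal_cone P x = {v. \<forall>z\<in>P. v \<bullet> z \<le> v \<bullet> x}"
proof (intro set_eqI iffI CollectI ballI)
  fix v assume "v \<in> normal_cone P x"
  then have eq: "ereal (v \<bullet> x) = (SUP z\<in>P. ereal (v \<bullet> z))" by (simp add: normal_cone_def support_fun_def)
  fix z assume "z \<in> P"
  then have "ereal (v \<bullet> z) \<le> (SUP z\<in>P. ereal (v \<bullet> z))" by (rule SUP_upper)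
  then show "v \<bullet> z \<le> v \<bullet> x" unfolding eq[symmetric] by simp
next
  fix v assume "v \<in> {v. \<forall>z\<in>P. v \<bullet> z \<le> v \<bullet> x}"
  then have h: "\<And>z. z \<in> P \<Longrightarrow> v \<bullet> z \<le> v \<bullet> x" by blast
  have "(SUP z\<in>P. ereal (v \<bullet> z)) \<le> ereal (v \<bullet> x)" by (rule SUP_least) (simp add: h)
  moreover have "ereal (v \<bullet> x) \<le> (SUP z\<in>P. ereal (v \<bullet> z))" by (rule SUP_upper[OF assms])
  ultimately show "v \<in> normal_cone P x" by (simp add: normal_cone_def support_fun_def antisym)
qed

lemma normal_cone_NC:
  assumes xP: "x \<in> polyP u a I J K"
  shows "normal_cone (polyP u a I J K) x = NC u I J K {i. u i \<bullet> x = a $ i}"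
proof (unfold normal_cone_alt[OF xP], intro set_eqI iffI)
  fix v assume "v \<in> {v. \<forall>z\<in>polyP u a I J K. v \<bullet> z \<le> v \<bullet> x}"
  then have h: "\<And>z. z \<in> polyP u a I J K \<Longrightarrow> v \<bullet> z \<le> v \<bullet> x" by blast
  show "v \<in> NC u I J K {i. u i \<bullet> x = a $ i}"
    unfolding NC_def
  proof (intro CollectI allI impI)
    fix d assume d: "(\<forall>i\<in>I. u i \<bullet> d = 0) \<and> (\<forall>i\<in>J \<inter> {i. u i \<bullet> x = a $ i}. u i \<bullet> d \<le> 0) \<and>
        (\<forall>i\<in>K \<inter> {i. u i \<bullet> x = a $ i}. 0 \<le> u i \<bullet> d)"
    have "\<exists>e>0. x + e *\<^sub>R d \<in> polyP u a I J K" by (rule ev_step[OF xP]) (use d in auto)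
    then obtain e where e: "0 < e" "x + e *\<^sub>R d \<in> polyP u a I J K" by blast
    have "v \<bullet> (x + e *\<^sub>R d) \<le> v \<bullet> x" by (rule h[OF e(2)])
    then have "e * (v \<bullet> d) \<le> 0" by (simp add: inner_add_right)
    then show "v \<bullet> d \<le> 0" using e(1) by (simp add: mult_le_0_iff)
  qed
next
  fix v assume v: "v \<in> NC u I J K {i. u i \<bullet> x = a $ i}"
  show "v \<in> {v. \<forall>z\<in>polyP u a I J K. v \<bullet> z \<le> v \<bullet> x}"
  proof (intro CollectI ballI)
    fix z assume zP: "z \<in> polyP u a I J K"
    have "v \<bullet> (z - x) \<le> 0"
      using v unfolding NC_def
    proof (elim CollectE allE impE)
      show "(\<forall>i\<in>I. u i \<bullet> (z - x) = 0) \<and> (\<forall>i\<in>J \<inter> {i. u i \<bullet> x = a $ i}. u i \<bullet> (z - x) \<le> 0) \<and>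
        (\<forall>i\<in>K \<inter> {i. u i \<bullet> x = a $ i}. 0 \<le> u i \<bullet> (z - x))"
        using zP xP by (auto simp: polyP_def inner_diff_right)
    qed
    then show "v \<bullet> z \<le> v \<bullet> x" by (simp add: inner_diff_right)
  qed
qed

lemma normal_fan_sig:
  assumes part: "I \<union> J \<union> K = UNIV"
  shows "normal_fan (polyP u a I J K) = {NC u I J K {i. sig u a x i = 0} | x. compat I J K (sig u a x)}"
proof (intro set_eqI iffI)
  fix X assume "X \<in> normal_fan (polyP u a I J K)"
  then obtain x G where X: "X = normal_cone (polyP u a I J K) x" and G: "G face_of polyP u a I J K"
    "x \<in> rel_interior G" unfolding normal_fan_def by blast
  have xP: "x \<in> polyP u a I J K" using G face_of_imp_subset rel_interior_subset by blast
  have "X = NC u I J K {i. sig u a x i = 0}" using normal_cone_NC[OF xP] X by (simp add: sig_zero)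
  then show "X \<in> {NC u I J K {i. sig u a x i = 0} | x. compat I J K (sig u a x)}"
    using xP by (auto simp: polyP_sig)
next
  fix X assume "X \<in> {NC u I J K {i. sig u a x i = 0} | x. compat I J K (sig u a x)}"
  then obtain x where X: "X = NC u I J K {i. sig u a x i = 0}" and xP: "x \<in> polyP u a I J K"
    by (auto simp: polyP_sig)
  let ?G = "FF u a I J K {i. u i \<bullet> x = a $ i}"
  have fG: "?G face_of polyP u a I J K" by (rule face_FF[OF part])
  have xG: "x \<in> ?G" using xP by (simp add: FF_def)
  then have "?G \<noteq> {}" by blast
  then obtain x' where x': "x' \<in> rel_interior ?G" "?G = FF u a I J K {i. u i \<bullet> x' = a $ i}"
    using face_is_FF[OF part fG] by blast
  have x'G: "x' \<in> ?G" using x'(1) rel_interior_subset by blast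
  have x'P: "x' \<in> polyP u a I J K" using x'G by (simp add: FF_def)
  have "{i. u i \<bullet> x = a $ i} \<subseteq> {i. u i \<bullet> x' = a $ i}" using x'G by (auto simp: FF_def)
  moreover have "{i. u i \<bullet> x' = a $ i} \<subseteq> {i. u i \<bullet> x = a $ i}" using xG x'(2) by (auto simp: FF_def)
  ultimately have T: "{i. u i \<bullet> x' = a $ i} = {i. u i \<bullet> x = a $ i}" by blast
  have "X = normal_cone (polyP u a I J K) x'" using X normal_cone_NC[OF x'P] T by (simp add: sig_zero)
  then show "X \<in> normal_fan (polyP u a I J K)" unfolding normal_fan_def using fG \<open>?G \<noteq> {}\<close> x'(1) by blast
qed

lemma faces_FF:
  assumes part: "I \<union> J \<union> K = UNIV"
  shows "{F. F face_of polyP u a I J K} = insert {} (range (FF u a I J K))"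
proof (intro set_eqI iffI)
  fix F assume "F \<in> {F. F face_of polyP u a I J K}"
  then have F: "F face_of polyP u a I J K" by simp
  show "F \<in> insert {} (range (FF u a I J K))"
  proof (cases "F = {}")
    case False
    then obtain x where "F = FF u a I J K {i. u i \<bullet> x = a $ i}" using face_is_FF[OF part F] by blast
    then show ?thesis by blast
  qed simp
next
  fix F assume "F \<in> insert {} (range (FF u a I J K))"
  then show "F \<in> {F. F face_of polyP u a I J K}" using face_FF[OF part] by auto
qed

lemma comb_generic:
  assumes sub: "\<And>S S'. A S \<subseteq> A S' \<longleftrightarrow> B S \<subseteq> B S'" and emp: "\<And>S. A S = {} \<longleftrightarrow> B S = {}"
  shows "\<exists>f. bij_betw f (insert {} (range A)) (insert {} (range B)) \<and>
    (\<forall>X1\<in>insert {} (range A). \<forall>X2\<in>insert {} (range A). X1 \<subseteq> X2 \<longleftrightarrow> f X1 \<subseteq> f X2)"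
proof -
  define f where "f X = (if X = {} then {} else B (SOME S. X = A S))" for X
  have fA: "f (A S) = B S" for S
  proof (cases "A S = {}")
    case True then show ?thesis using emp by (simp add: f_def)
  next
    case False
    have "A S = A (SOME S'. A S = A S')" by (rule someI[of "\<lambda>S'. A S = A S'" S]) simp
    then have "B (SOME S'. A S = A S') = B S" using sub by (metis subset_antisym order_refl)
    then show ?thesis using False by (simp add: f_def)
  qed
  have f0: "f {} = {}" by (simp add: f_def)
  have ord: "X1 \<subseteq> X2 \<longleftrightarrow> f X1 \<subseteq> f X2" if "X1 \<in> insert {} (range A)" "X2 \<in> insert {} (range A)" for X1 X2
    using that
  proof (elim insertE rangeE)
    fix S1 S2 assume "X1 = A S1" "X2 = A S2" then show ?thesis using fA sub by simp
  next
    fix S1 assume "X1 = A S1" "X2 = {}" then show ?thesis using fA f0 emp by simp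
  next
    fix S2 assume "X1 = {}" "X2 = A S2" then show ?thesis using fA f0 by simp
  next
    assume "X1 = {}" "X2 = {}" then show ?thesis by simp
  qed
  have "bij_betw f (insert {} (range A)) (insert {} (range B))"
    unfolding bij_betw_def
  proof
    show "inj_on f (insert {} (range A))"
      by (rule inj_onI) (metis ord subset_antisym order_refl)
    show "f ` insert {} (range A) = insert {} (range B)"
      using fA f0 by (auto simp: image_iff)
  qed
  then show ?thesis using ord by blast
qed


theorem theorem1p1:
  fixes u :: "'m::finite \<Rightarrow> real^'n::finite"
    and cv :: "'m set \<Rightarrow> real^'m"
    and F G :: "(real^'m) set"
    and a b :: "real^'m"
  assumes nonzero: "\<forall>i. u i \<noteq> 0"
    and cv: "\<forall>C. is_circuit u C \<longrightarrow> is_circuit_vector u C (cv C)"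
    and F: "F \<in> derived_faces u cv"
    and G: "G \<in> derived_open_faces u cv" "closure G = F"
    and ab: "a \<in> G" "b \<in> G"
  shows "\<forall>I J K. I \<union> J \<union> K = UNIV \<and> I \<inter> J = {} \<and> I \<inter> K = {} \<and> J \<inter> K = {} \<longrightarrow>
           (polyP u a I J K = {} \<longleftrightarrow> polyP u b I J K = {}) \<and>
           (polyP u a I J K \<noteq> {} \<longrightarrow>
              normally_equivalent (polyP u a I J K) (polyP u b I J K) \<and>
              comb_equivalent (polyP u a I J K) (polyP u b I J K))"
proof (intro allI impI)
  fix I J K :: "'m set"
  assume "I \<union> J \<union> K = UNIV \<and> I \<inter> J = {} \<and> I \<inter> K = {} \<and> J \<inter> K = {}"
  then have part: "I \<union> J \<union> K = UNIV" by blast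
  obtain \<epsilon> where Geq: "G = {y. \<forall>C. is_circuit u C \<longrightarrow> sgn (cv C \<bullet> y) = \<epsilon> C}"
    using G(1) unfolding derived_open_faces_def by blast
  have hsg: "\<forall>C. is_circuit u C \<longrightarrow> sgn (cv C \<bullet> a) = sgn (cv C \<bullet> b)" using ab Geq by auto
  have hsg': "\<forall>C. is_circuit u C \<longrightarrow> sgn (cv C \<bullet> b) = sgn (cv C \<bullet> a)" using hsg by auto
  have tr: "(\<exists>x. \<Phi> (sig u a x)) \<longleftrightarrow> (\<exists>y. \<Phi> (sig u b y))" for \<Phi>
    using transfer[OF cv hsg, of \<Phi>] transfer[OF cv hsg', of \<Phi>] by blast
  have e1: "polyP u a I J K = {} \<longleftrightarrow> polyP u b I J K = {}"
    using tr[of "compat I J K"] by (auto simp: polyP_sig)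
  have ne: "normal_fan (polyP u a I J K) = normal_fan (polyP u b I J K)"
  proof -
    have "X \<in> {NC u I J K {i. sig u a x i = 0} | x. compat I J K (sig u a x)} \<longleftrightarrow>
          X \<in> {NC u I J K {i. sig u b x i = 0} | x. compat I J K (sig u b x)}" for X
      using tr[of "\<lambda>\<sigma>. compat I J K \<sigma> \<and> X = NC u I J K {i. \<sigma> i = 0}"] by auto
    then show ?thesis unfolding normal_fan_sig[OF part] by blast
  qed
  have emp: "FF u a I J K S = {} \<longleftrightarrow> FF u b I J K S = {}" for S
  proof -
    have "FF u c I J K S \<noteq> {} \<longleftrightarrow> (\<exists>x. compat I J K (sig u c x) \<and> (\<forall>i\<in>S. sig u c x i = 0))" for c
      by (auto simp: FF_def polyP_sig sig_zero)
    then show ?thesis using tr[of "\<lambda>\<sigma>. compat I J K \<sigma> \<and> (\<forall>i\<in>S. \<sigma> i = 0)"] by blast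
  qed
  have sub: "FF u a I J K S \<subseteq> FF u a I J K S' \<longleftrightarrow> FF u b I J K S \<subseteq> FF u b I J K S'" for S S'
  proof -
    have "\<not> FF u c I J K S \<subseteq> FF u c I J K S' \<longleftrightarrow>
        (\<exists>x. compat I J K (sig u c x) \<and> (\<forall>i\<in>S. sig u c x i = 0) \<and> \<not> (\<forall>i\<in>S'. sig u c x i = 0))" for c
      by (auto simp: FF_def polyP_sig sig_zero)
    then show ?thesis
      using tr[of "\<lambda>\<sigma>. compat I J K \<sigma> \<and> (\<forall>i\<in>S. \<sigma> i = 0) \<and> \<not> (\<forall>i\<in>S'. \<sigma> i = 0)"] by blast
  qed
  obtain f where f: "bij_betw f (insert {} (range (FF u a I J K))) (insert {} (range (FF u b I J K)))"
    "\<forall>X1\<in>insert {} (range (FF u a I J K)). \<forall>X2\<in>insert {} (range (FF u a I J K)). X1 \<subseteq> X2 \<longleftrightarrow> f X1 \<subseteq> f X2"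
    using comb_generic[of "FF u a I J K" "FF u b I J K", OF sub emp] by blast
  have ce: "comb_equivalent (polyP u a I J K) (polyP u b I J K)"
    unfolding comb_equivalent_def faces_FF[OF part]
  proof (intro exI[of _ f] conjI allI impI)
    show "bij_betw f (insert {} (range (FF u a I J K))) (insert {} (range (FF u b I J K)))" by (rule f(1))
    fix F1 F2 assume "F1 face_of polyP u a I J K" "F2 face_of polyP u a I J K"
    then have "F1 \<in> insert {} (range (FF u a I J K))" "F2 \<in> insert {} (range (FF u a I J K))"
      using faces_FF[OF part] by blast+
    then show "F1 \<subseteq> F2 \<longleftrightarrow> f F1 \<subseteq> f F2" using f(2) by blast
  qed
  show "(polyP u a I J K = {} \<longleftrightarrow> polyP u b I J K = {}) \<and>
        (polyP u a I J K \<noteq> {} \<longrightarrow>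
           normally_equivalent (polyP u a I J K) (polyP u b I J K) \<and>
           comb_equivalent (polyP u a I J K) (polyP u b I J K))"
    using e1 ne ce by (simp add: normally_equivalent_def)
qed

end
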